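(* Let $N\ge1$, $M=2^N$, let $\mathcal{A}=\{a_0,\dots,a_{M-1}\}\subset\mathbb{C}$ be a constellation with any labelling, and let $S\subseteq\{0,\dots,N-1\}$. Let $\mathcal{M}'_S=\{i:\ b_l(i)=0\ \text{for all } l\in\{0,\dots,N-1\}\setminus S\}$. Suppose the points $\{a_i: i\in\mathcal{M}'_S\}$ form a family of rectangles (each with four of these points as vertices, together covering all of them) such that no two rectangles share a vertex, and in each rectangle the labels of one diagonal pair both contain an odd number of $0$s while the labels of the other diagonal pair both contain an even number of $0$s (in their $N$-bit binary representations). Then for all $y,h\in\mathbb{C}$, with $d_i=|y-ha_i|^2$, the coefficient $\bar d_S$ of the monomial $\prod_{n\in S}z_n$ in the associated pseudo-Boolean function $f$ is zero.
   Context: For $i\in\{0,\dots,M-1\}$ write its $N$-bit binary representation as $b_0(i)\cdots b_{N-1}(i)$ with $b_0$ the most significant bit; this is the label of $a_i$. Given $d_0,\dots,d_{M-1}$, define $f(z_0,\dots,z_{N-1})=\sum_{i}d_i\prod_{n=0}^{N-1}B_{i,n}(z_n)$, $z_n\in\{0,1\}$, with $B_{i,n}(z)=z$ if $b_n(i)=1$ and $1-z$ if $b_n(i)=0$. Its multilinear expansion is $f=\sum_{S}\bar d_S\prod_{n\in S}z_n$ with $\bar d_S=\sum_{i\in\mathcal{M}'_S}d_i\prod_{n\in S}(-1)^{1-b_n(i)}$. *)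

theory Defs
  imports Complex_Main
begin

text \<open>Bit n (n = 0 is the most significant) of the N-bit representation of i.\<close>
definition lbit :: "nat \<Rightarrow> nat \<Rightarrow> nat \<Rightarrow> nat" where
  "lbit N n i = (if bit i (N - 1 - n) then 1 else 0)"

definition Mprime :: "nat \<Rightarrow> nat set \<Rightarrow> nat set" where
  "Mprime N S = {i. i < 2 ^ N \<and> (\<forall>l<N. l \<notin> S \<longrightarrow> lbit N l i = 0)}"

definition zeros :: "nat \<Rightarrow> nat \<Rightarrow> nat" where
  "zeros N i = card {n. n < N \<and> lbit N n i = 0}"

text \<open>Coefficient of the monomial prod_{n in S} z_n of the pseudo-Boolean function f.\<close>
definition dbar :: "nat \<Rightarrow> (nat \<Rightarrow> real) \<Rightarrow> nat set \<Rightarrow> real" where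
  "dbar N d S = (\<Sum>i\<in>Mprime N S. d i * (\<Prod>n\<in>S. (-1) ^ (1 - lbit N n i)))"

text \<open>w, x, y, z are the consecutive vertices of a (non-degenerate) rectangle:
  four distinct points, a parallelogram, with a right angle at w.
  Hence {w, y} and {x, z} are the two diagonal pairs.\<close>
definition is_rectangle :: "complex \<Rightarrow> complex \<Rightarrow> complex \<Rightarrow> complex \<Rightarrow> bool" where
  "is_rectangle w x y z \<longleftrightarrow> distinct [w, x, y, z] \<and> w + y = x + z
      \<and> Re ((x - w) * cnj (z - w)) = 0"

end

theory Submission
  imports Defs
begin

lemma lbit01: "lbit N n i = 0 \<or> lbit N n i = 1"
  by (simp add: lbit_def)

lemma sign_lemma:
  assumes S: "S \<subseteq> {..<N}" and i: "i \<in> Mprime N S"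
  shows "(\<Prod>n\<in>S. (-1::real) ^ (1 - lbit N n i)) = (-1) ^ (N - card S) * (-1) ^ zeros N i"
proof -
  have fS: "finite S" using S finite_subset by blast
  have out: "\<And>l. l < N \<Longrightarrow> l \<notin> S \<Longrightarrow> lbit N l i = 0" using i by (auto simp: Mprime_def)
  have "(\<Prod>n\<in>S. (-1::real) ^ (1 - lbit N n i)) = (\<Prod>n\<in>S. if lbit N n i = 0 then -1 else 1)"
    by (rule prod.cong) (use lbit01 in auto)
  also have "\<dots> = (-1) ^ card {n\<in>S. lbit N n i = 0}"
    using fS by (simp add: prod.If_cases Int_def)
  finally have 1: "(\<Prod>n\<in>S. (-1::real) ^ (1 - lbit N n i)) = (-1) ^ card {n\<in>S. lbit N n i = 0}" .
  have eq: "{n. n < N \<and> lbit N n i = 0} = {n\<in>S. lbit N n i = 0} \<union> ({..<N} - S)"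
    using S out by auto
  have "zeros N i = card {n\<in>S. lbit N n i = 0} + card ({..<N} - S)"
    unfolding zeros_def eq using fS by (subst card_Un_disjoint) auto
  also have "card ({..<N} - S) = N - card S" using S fS by (simp add: card_Diff_subset)
  finally have z: "zeros N i = card {n\<in>S. lbit N n i = 0} + (N - card S)" .
  have sq: "(-1::real)^(N - card S) * (-1)^(N - card S) = 1"
    by (metis power_add mult_2 power_mult neg_one_even_power even_mult_iff even_numeral)
  show ?thesis unfolding 1 z power_add
    using sq by (simp add: mult.assoc[symmetric])
qed

lemma rect_sum:
  assumes "is_rectangle w x v z"
  shows "(cmod (y - h * w))\<^sup>2 + (cmod (y - h * v))\<^sup>2 = (cmod (y - h * x))\<^sup>2 + (cmod (y - h * z))\<^sup>2"
proof -
  from assms have s: "w + v = x + z" and r: "Re ((x - w) * cnj (z - w)) = 0"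
    by (auto simp: is_rectangle_def)
  have v: "v = x + z - w" using s by (simp add: algebra_simps)
  have rr: "Re x * Re z - Re x * Re w - Re w * Re z + Re w * Re w + Im x * Im z - Im x * Im w - Im w * Im z + Im w * Im w = 0"
    using r by (simp add: algebra_simps)
  show ?thesis unfolding v cmod_power2
    apply (simp add: power2_eq_square)
    using rr by algebra
qed


theorem corollary2:
  fixes N :: nat and a :: "nat \<Rightarrow> complex" and S :: "nat set"
    and P :: "nat set set" and y h :: complex
  assumes "N \<ge> 1"
    and "inj_on a {..<2 ^ N}"
    and "S \<subseteq> {..<N}"
    and "\<Union>P = Mprime N S"
    and "\<forall>Q\<in>P. \<forall>Q'\<in>P. Q \<noteq> Q' \<longrightarrow> Q \<inter> Q' = {}"
    and "\<forall>Q\<in>P. \<exists>p q r s. Q = {p, q, r, s} \<and> is_rectangle (a p) (a q) (a r) (a s)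
            \<and> odd (zeros N p) \<and> odd (zeros N r) \<and> even (zeros N q) \<and> even (zeros N s)"
  shows "dbar N (\<lambda>i. (cmod (y - h * a i))\<^sup>2) S = 0"
proof -
  define d where "d = (\<lambda>i. (cmod (y - h * a i))\<^sup>2)"
  define g where "g = (\<lambda>i. d i * (-1::real) ^ zeros N i)"
  have finM: "finite (Mprime N S)" unfolding Mprime_def by auto
  have finQ: "\<forall>Q\<in>P. finite Q" using assms(4) finM
    by (metis Union_upper finite_subset)
  have "dbar N d S = (\<Sum>i\<in>Mprime N S. (-1) ^ (N - card S) * g i)"
    unfolding dbar_def g_def
    by (rule sum.cong) (use sign_lemma[OF assms(3)] in auto)
  also have "\<dots> = (-1) ^ (N - card S) * (\<Sum>i\<in>Mprime N S. g i)"
    by (simp add: sum_distrib_left)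
  also have "(\<Sum>i\<in>Mprime N S. g i) = (\<Sum>Q\<in>P. \<Sum>i\<in>Q. g i)"
    unfolding assms(4)[symmetric]
    using sum.Union_disjoint[OF finQ assms(5), of g] by simp
  also have "\<dots> = 0"
  proof (rule sum.neutral, rule ballI)
    fix Q assume "Q \<in> P"
    have "\<exists>p q r s. Q = {p, q, r, s} \<and> is_rectangle (a p) (a q) (a r) (a s)
            \<and> odd (zeros N p) \<and> odd (zeros N r) \<and> even (zeros N q) \<and> even (zeros N s)"
      using assms(6) \<open>Q \<in> P\<close> by (rule bspec)
    then obtain p q r s where Q: "Q = {p, q, r, s}" and R: "is_rectangle (a p) (a q) (a r) (a s)"
      and z: "odd (zeros N p)" "odd (zeros N r)" "even (zeros N q)" "even (zeros N s)"
      by (elim exE conjE) (rule that)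
    have dist: "distinct [p, q, r, s]" using R unfolding is_rectangle_def by auto
    have e1: "(-1::real) ^ zeros N p = -1" using z(1) by (rule power_minus_odd[of _ 1, simplified])
    have e2: "(-1::real) ^ zeros N r = -1" using z(2) by (rule power_minus_odd[of _ 1, simplified])
    have e3: "(-1::real) ^ zeros N q = 1" using z(3) by (rule power_minus_even[of _ 1, simplified])
    have e4: "(-1::real) ^ zeros N s = 1" using z(4) by (rule power_minus_even[of _ 1, simplified])
    have "(\<Sum>i\<in>Q. g i) = g p + g q + g r + g s" using dist unfolding Q by simp
    also have "\<dots> = d q + d s - d p - d r" unfolding g_def e1 e2 e3 e4 by simp
    also have "\<dots> = 0" using rect_sum[OF R, of y h] unfolding d_def by simp
    finally show "(\<Sum>i\<in>Q. g i) = 0" .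
  qed
  finally show ?thesis unfolding d_def by simp
qed

end
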